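(* Let $(\mathcal M,g_{ab})$ be a 4-dimensional Lorentzian manifold with a Killing vector $\vec\zeta$, and suppose that on an open set the Ernst one-form admits a potential $\sigma'$ ($\sigma_a=\nabla_a\sigma'$) with $\sigma'\neq0$. Then, on that set, $$\mathcal S_{abc}=\gamma_{a[b}\mathcal S(\sigma')_{c]mrd}\zeta^m\mathcal F^{rd}+4\zeta^m\zeta^r\mathcal S(\sigma')_{mar[c}\sigma_{b]},$$ i.e. the space-time Simon tensor is obtained by replacing $\mathcal C_{abcd}$ by $\mathcal S(\sigma')_{abcd}$ in its definition (in particular this expression is independent of the choice of $\sigma'$).
   Context: $(\mathcal M,g_{ab})$ is a 4-dimensional Lorentzian manifold (signature $(-,+,+,+)$) with volume form $\eta_{abcd}$ and Weyl tensor $C_{abcd}$. For a Killing vector $\vec\zeta$: $\lambda=\zeta_a\zeta^a$, $F_{ab}=\nabla_a\zeta_b$, $F^*_{ab}=\tfrac12\eta_{abcd}F^{cd}$, $\mathcal F_{ab}=F_{ab}+iF^*_{ab}$, $\mathcal F\cdot\mathcal F=\mathcal F_{ab}\mathcal F^{ab}$; $C^*_{abcd}=\tfrac12\eta_{cdpq}C_{ab}{}^{pq}$, $\mathcal C_{abcd}=C_{abcd}+iC^*_{abcd}$; Ernst one-form $\sigma_a=2\mathcal F_{ab}\zeta^b$; $\gamma_{ab}=\zeta_a\zeta_b-\lambda g_{ab}$; $\mathcal I_{abcd}=\tfrac14(i\eta_{abcd}+g_{ac}g_{bd}-g_{ad}g_{bc})$; $\mathcal Q_{abcd}=6(\mathcal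 F_{ab}\mathcal F_{cd}-\tfrac13\mathcal I_{abcd}\,\mathcal F\cdot\mathcal F)$; Mars–Simon tensor $\mathcal S(\sigma')_{abcd}=\mathcal C_{abcd}+\frac1{\sigma'}\mathcal Q_{abcd}$; space-time Simon tensor $\mathcal S_{abc}=\gamma_{a[b}\mathcal C_{c]mrd}\zeta^m\mathcal F^{rd}+4\zeta^m\zeta^r\mathcal C_{mar[c}\sigma_{b]}$. *)

theory Defs
  imports "HOL-Analysis.Analysis" "HOL-Library.Numeral_Type"
begin

text \<open>Local (chart) model: a 4-dimensional spacetime is represented on a coordinate
  domain U, an open subset of real^4. Index values are elements of the 4-element type 4.
  Tensors are given by their components in the coordinate basis.\<close>

type_synonym pt = "real^4"

definition pd :: "(pt \<Rightarrow> 'b::real_normed_vector) \<Rightarrow> 4 \<Rightarrow> pt \<Rightarrow> 'b" where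
  "pd f a x = frechet_derivative f (at x) (axis a 1)"

primrec pds :: "(pt \<Rightarrow> 'b::real_normed_vector) \<Rightarrow> 4 list \<Rightarrow> pt \<Rightarrow> 'b" where
  "pds f [] = f"
| "pds f (a # as) = pd (pds f as) a"

definition smooth_on :: "pt set \<Rightarrow> (pt \<Rightarrow> 'b::real_normed_vector) \<Rightarrow> bool" where
  "smooth_on U f \<longleftrightarrow> (\<forall>as. \<forall>x\<in>U. pds f as differentiable (at x))"

definition minkowski :: "real^4^4" where
  "minkowski = (\<chi> i j. if i = j then (if i = 0 then -1 else 1) else 0)"

definition lorentzian_matrix :: "real^4^4 \<Rightarrow> bool" where
  "lorentzian_matrix G \<longleftrightarrow> transpose G = G \<and>
     (\<exists>P::real^4^4. invertible P \<and> transpose P ** G ** P = minkowski)"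

definition ginv :: "(pt \<Rightarrow> real^4^4) \<Rightarrow> pt \<Rightarrow> real^4^4" where
  "ginv g x = matrix_inv (g x)"

definition christ :: "(pt \<Rightarrow> real^4^4) \<Rightarrow> pt \<Rightarrow> 4 \<Rightarrow> 4 \<Rightarrow> 4 \<Rightarrow> real" where
  "christ g x a b c = (1/2) * (\<Sum>d\<in>UNIV. ginv g x $ a $ d *
      (pd (\<lambda>y. g y $ d $ c) b x + pd (\<lambda>y. g y $ d $ b) c x - pd (\<lambda>y. g y $ b $ c) d x))"

text \<open>Riemann tensor R^a_{bcd} (convention: [nabla_c, nabla_d] V^a = R^a_{bcd} V^b).\<close>
definition riem_up :: "(pt \<Rightarrow> real^4^4) \<Rightarrow> pt \<Rightarrow> 4 \<Rightarrow> 4 \<Rightarrow> 4 \<Rightarrow> 4 \<Rightarrow> real" where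
  "riem_up g x a b c d =
     pd (\<lambda>y. christ g y a d b) c x - pd (\<lambda>y. christ g y a c b) d x
     + (\<Sum>e\<in>UNIV. christ g x a c e * christ g x e d b - christ g x a d e * christ g x e c b)"

definition riem :: "(pt \<Rightarrow> real^4^4) \<Rightarrow> pt \<Rightarrow> 4 \<Rightarrow> 4 \<Rightarrow> 4 \<Rightarrow> 4 \<Rightarrow> real" where
  "riem g x a b c d = (\<Sum>e\<in>UNIV. g x $ a $ e * riem_up g x e b c d)"

definition ricci :: "(pt \<Rightarrow> real^4^4) \<Rightarrow> pt \<Rightarrow> 4 \<Rightarrow> 4 \<Rightarrow> real" where
  "ricci g x b d = (\<Sum>a\<in>UNIV. riem_up g x a b a d)"

definition scal :: "(pt \<Rightarrow> real^4^4) \<Rightarrow> pt \<Rightarrow> real" where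
  "scal g x = (\<Sum>b\<in>UNIV. \<Sum>d\<in>UNIV. ginv g x $ b $ d * ricci g x b d)"

definition weyl :: "(pt \<Rightarrow> real^4^4) \<Rightarrow> pt \<Rightarrow> 4 \<Rightarrow> 4 \<Rightarrow> 4 \<Rightarrow> 4 \<Rightarrow> real" where
  "weyl g x a b c d = riem g x a b c d
     - (1/2) * (g x $ a $ c * ricci g x d b - g x $ a $ d * ricci g x c b
                - g x $ b $ c * ricci g x d a + g x $ b $ d * ricci g x c a)
     + (1/6) * scal g x * (g x $ a $ c * g x $ d $ b - g x $ a $ d * g x $ c $ b)"

text \<open>Levi-Civita symbol: determinant of the permutation matrix (0,1,2,3) -> (a,b,c,d).\<close>
definition idx4 :: "4 \<Rightarrow> 4 \<Rightarrow> 4 \<Rightarrow> 4 \<Rightarrow> 4 \<Rightarrow> 4" where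
  "idx4 a b c d i = (if i = 0 then a else if i = 1 then b else if i = 2 then c else d)"

definition levi_civita :: "4 \<Rightarrow> 4 \<Rightarrow> 4 \<Rightarrow> 4 \<Rightarrow> real" where
  "levi_civita a b c d = det (\<chi> i. axis (idx4 a b c d i) (1::real))"

text \<open>Volume form eta_abcd = s sqrt|det g| epsilon_abcd, with s = +-1 the orientation.\<close>
definition vol :: "(pt \<Rightarrow> real^4^4) \<Rightarrow> (pt \<Rightarrow> real) \<Rightarrow> pt \<Rightarrow> 4 \<Rightarrow> 4 \<Rightarrow> 4 \<Rightarrow> 4 \<Rightarrow> real" where
  "vol g s x a b c d = s x * sqrt \<bar>det (g x)\<bar> * levi_civita a b c d"

text \<open>zeta_b = g_bc zeta^c (zeta given by contravariant components).\<close>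
definition zlow :: "(pt \<Rightarrow> real^4^4) \<Rightarrow> (pt \<Rightarrow> real^4) \<Rightarrow> pt \<Rightarrow> 4 \<Rightarrow> real" where
  "zlow g \<zeta> x b = (\<Sum>c\<in>UNIV. g x $ b $ c * \<zeta> x $ c)"

definition Fk :: "(pt \<Rightarrow> real^4^4) \<Rightarrow> (pt \<Rightarrow> real^4) \<Rightarrow> pt \<Rightarrow> 4 \<Rightarrow> 4 \<Rightarrow> real" where
  "Fk g \<zeta> x a b = pd (\<lambda>y. zlow g \<zeta> y b) a x - (\<Sum>c\<in>UNIV. christ g x c a b * zlow g \<zeta> x c)"

definition lam :: "(pt \<Rightarrow> real^4^4) \<Rightarrow> (pt \<Rightarrow> real^4) \<Rightarrow> pt \<Rightarrow> real" where
  "lam g \<zeta> x = (\<Sum>a\<in>UNIV. zlow g \<zeta> x a * \<zeta> x $ a)"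

definition Fup :: "(pt \<Rightarrow> real^4^4) \<Rightarrow> (pt \<Rightarrow> real^4) \<Rightarrow> pt \<Rightarrow> 4 \<Rightarrow> 4 \<Rightarrow> real" where
  "Fup g \<zeta> x c d = (\<Sum>p\<in>UNIV. \<Sum>q\<in>UNIV. ginv g x $ c $ p * ginv g x $ d $ q * Fk g \<zeta> x p q)"

definition Fstar :: "(pt \<Rightarrow> real^4^4) \<Rightarrow> (pt \<Rightarrow> real) \<Rightarrow> (pt \<Rightarrow> real^4) \<Rightarrow> pt \<Rightarrow> 4 \<Rightarrow> 4 \<Rightarrow> real" where
  "Fstar g s \<zeta> x a b = (1/2) * (\<Sum>c\<in>UNIV. \<Sum>d\<in>UNIV. vol g s x a b c d * Fup g \<zeta> x c d)"

definition cF :: "(pt \<Rightarrow> real^4^4) \<Rightarrow> (pt \<Rightarrow> real) \<Rightarrow> (pt \<Rightarrow> real^4) \<Rightarrow> pt \<Rightarrow> 4 \<Rightarrow> 4 \<Rightarrow> complex" where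
  "cF g s \<zeta> x a b = complex_of_real (Fk g \<zeta> x a b) + \<i> * complex_of_real (Fstar g s \<zeta> x a b)"

definition cFup :: "(pt \<Rightarrow> real^4^4) \<Rightarrow> (pt \<Rightarrow> real) \<Rightarrow> (pt \<Rightarrow> real^4) \<Rightarrow> pt \<Rightarrow> 4 \<Rightarrow> 4 \<Rightarrow> complex" where
  "cFup g s \<zeta> x r d = (\<Sum>p\<in>UNIV. \<Sum>q\<in>UNIV.
      complex_of_real (ginv g x $ r $ p * ginv g x $ d $ q) * cF g s \<zeta> x p q)"

definition cFF :: "(pt \<Rightarrow> real^4^4) \<Rightarrow> (pt \<Rightarrow> real) \<Rightarrow> (pt \<Rightarrow> real^4) \<Rightarrow> pt \<Rightarrow> complex" where
  "cFF g s \<zeta> x = (\<Sum>a\<in>UNIV. \<Sum>b\<in>UNIV. cF g s \<zeta> x a b * cFup g s \<zeta> x a b)"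

definition ernst :: "(pt \<Rightarrow> real^4^4) \<Rightarrow> (pt \<Rightarrow> real) \<Rightarrow> (pt \<Rightarrow> real^4) \<Rightarrow> pt \<Rightarrow> 4 \<Rightarrow> complex" where
  "ernst g s \<zeta> x a = 2 * (\<Sum>b\<in>UNIV. cF g s \<zeta> x a b * complex_of_real (\<zeta> x $ b))"

definition gam :: "(pt \<Rightarrow> real^4^4) \<Rightarrow> (pt \<Rightarrow> real^4) \<Rightarrow> pt \<Rightarrow> 4 \<Rightarrow> 4 \<Rightarrow> real" where
  "gam g \<zeta> x a b = zlow g \<zeta> x a * zlow g \<zeta> x b - lam g \<zeta> x * g x $ a $ b"

definition Cstar :: "(pt \<Rightarrow> real^4^4) \<Rightarrow> (pt \<Rightarrow> real) \<Rightarrow> pt \<Rightarrow> 4 \<Rightarrow> 4 \<Rightarrow> 4 \<Rightarrow> 4 \<Rightarrow> real" where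
  "Cstar g s x a b c d = (1/2) * (\<Sum>p\<in>UNIV. \<Sum>q\<in>UNIV. vol g s x c d p q *
      (\<Sum>u\<in>UNIV. \<Sum>v\<in>UNIV. ginv g x $ p $ u * ginv g x $ q $ v * weyl g x a b u v))"

definition cC :: "(pt \<Rightarrow> real^4^4) \<Rightarrow> (pt \<Rightarrow> real) \<Rightarrow> pt \<Rightarrow> 4 \<Rightarrow> 4 \<Rightarrow> 4 \<Rightarrow> 4 \<Rightarrow> complex" where
  "cC g s x a b c d = complex_of_real (weyl g x a b c d) + \<i> * complex_of_real (Cstar g s x a b c d)"

definition cI :: "(pt \<Rightarrow> real^4^4) \<Rightarrow> (pt \<Rightarrow> real) \<Rightarrow> pt \<Rightarrow> 4 \<Rightarrow> 4 \<Rightarrow> 4 \<Rightarrow> 4 \<Rightarrow> complex" where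
  "cI g s x a b c d = (1/4) * (\<i> * complex_of_real (vol g s x a b c d)
      + complex_of_real (g x $ a $ c * g x $ b $ d - g x $ a $ d * g x $ b $ c))"

definition cQ :: "(pt \<Rightarrow> real^4^4) \<Rightarrow> (pt \<Rightarrow> real) \<Rightarrow> (pt \<Rightarrow> real^4) \<Rightarrow> pt \<Rightarrow> 4 \<Rightarrow> 4 \<Rightarrow> 4 \<Rightarrow> 4 \<Rightarrow> complex" where
  "cQ g s \<zeta> x a b c d = 6 * (cF g s \<zeta> x a b * cF g s \<zeta> x c d - (1/3) * cI g s x a b c d * cFF g s \<zeta> x)"

text \<open>Mars-Simon tensor S(sigma')_abcd = C_abcd + Q_abcd / sigma' (sigma' = value of the potential).\<close>
definition mars_simon :: "(pt \<Rightarrow> real^4^4) \<Rightarrow> (pt \<Rightarrow> real) \<Rightarrow> (pt \<Rightarrow> real^4) \<Rightarrow> complex \<Rightarrow> pt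
     \<Rightarrow> 4 \<Rightarrow> 4 \<Rightarrow> 4 \<Rightarrow> 4 \<Rightarrow> complex" where
  "mars_simon g s \<zeta> sp x a b c d = cC g s x a b c d + cQ g s \<zeta> x a b c d / sp"

text \<open>The expression gamma_a[b T_c]mrd zeta^m F^rd + 4 zeta^m zeta^r T_mar[c sigma_b]
  for a 4-index complex tensor T (antisymmetrisation with weight 1/2).\<close>
definition simon_expr :: "(pt \<Rightarrow> real^4^4) \<Rightarrow> (pt \<Rightarrow> real) \<Rightarrow> (pt \<Rightarrow> real^4) \<Rightarrow> pt
     \<Rightarrow> (4 \<Rightarrow> 4 \<Rightarrow> 4 \<Rightarrow> 4 \<Rightarrow> complex) \<Rightarrow> 4 \<Rightarrow> 4 \<Rightarrow> 4 \<Rightarrow> complex" where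
  "simon_expr g s \<zeta> x T a b c =
     (1/2) * (complex_of_real (gam g \<zeta> x a b) *
                (\<Sum>m\<in>UNIV. \<Sum>r\<in>UNIV. \<Sum>d\<in>UNIV. T c m r d * complex_of_real (\<zeta> x $ m) * cFup g s \<zeta> x r d)
            - complex_of_real (gam g \<zeta> x a c) *
                (\<Sum>m\<in>UNIV. \<Sum>r\<in>UNIV. \<Sum>d\<in>UNIV. T b m r d * complex_of_real (\<zeta> x $ m) * cFup g s \<zeta> x r d))
   + 4 * ((1/2) * ((\<Sum>m\<in>UNIV. \<Sum>r\<in>UNIV. complex_of_real (\<zeta> x $ m * \<zeta> x $ r) * T m a r c) * ernst g s \<zeta> x b
                  - (\<Sum>m\<in>UNIV. \<Sum>r\<in>UNIV. complex_of_real (\<zeta> x $ m * \<zeta> x $ r) * T m a r b) * ernst g s \<zeta> x c))"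

definition simon :: "(pt \<Rightarrow> real^4^4) \<Rightarrow> (pt \<Rightarrow> real) \<Rightarrow> (pt \<Rightarrow> real^4) \<Rightarrow> pt \<Rightarrow> 4 \<Rightarrow> 4 \<Rightarrow> 4 \<Rightarrow> complex" where
  "simon g s \<zeta> x = simon_expr g s \<zeta> x (cC g s x)"

end

theory Submission
  imports Defs
begin

lemma ex4: "(x::4) = 0 \<or> x = 1 \<or> x = 2 \<or> x = 3"
proof -
  have "(4::4) = 0" by simp
  thus ?thesis using exhaust_4[of x] by auto
qed

lemma UNIV4': "(UNIV::4 set) = {0,1,2,3}"
proof (rule set_eqI)
  fix x :: 4 show "x \<in> UNIV \<longleftrightarrow> x \<in> {0,1,2,3}" using ex4[of x] by auto
qed

lemma dist4[simp]: "(0::4) \<noteq> 1" "(0::4) \<noteq> 2" "(0::4) \<noteq> 3" "(1::4) \<noteq> 2" "(1::4) \<noteq> 3" "(2::4) \<noteq> 3"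
  "(1::4) \<noteq> 0" "(2::4) \<noteq> 0" "(3::4) \<noteq> 0" "(2::4) \<noteq> 1" "(3::4) \<noteq> 1" "(3::4) \<noteq> 2"
  by simp_all

lemma sum4: "sum f (UNIV::4 set) = f 0 + f 1 + f 2 + f 3"
  unfolding UNIV4' by (simp add: add.assoc)

lemma idx4_0[simp]: "idx4 a b c d 0 = a" and idx4_1[simp]: "idx4 a b c d 1 = b"
  and idx4_2[simp]: "idx4 a b c d 2 = c" and idx4_3[simp]: "idx4 a b c d 3 = d"
  by (simp_all add: idx4_def)

lemma lc_perm:
  assumes "p permutes (UNIV::4 set)" "\<And>i. f' i = f (p i)"
  shows "det (\<chi> i. axis (f' i) (1::real)) = of_int (sign p) * det (\<chi> i. axis (f i) (1::real))"
proof -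
  have e: "(\<chi> i. axis (f' i) (1::real)) = (\<chi> i. (\<chi> i. axis (f i) (1::real)) $ p i)"
    using assms(2) by (simp add: vec_eq_iff)
  show ?thesis unfolding e by (rule det_permute_rows[OF assms(1)])
qed


lemma lc_swap01: "levi_civita b a c d = - levi_civita a b c d"
proof -
  have "levi_civita b a c d = of_int (sign (Transposition.transpose (0::4) 1)) * levi_civita a b c d"
    unfolding levi_civita_def
  proof (rule lc_perm[OF permutes_swap_id])
    fix i :: 4
    show "idx4 b a c d i = idx4 a b c d (Transposition.transpose 0 1 i)"
      using ex4[of i] by (elim disjE) (simp_all add: Transposition.transpose_def)
  qed simp_all
  thus ?thesis by (simp add: sign_swap_id)
qed

lemma lc_swap12: "levi_civita a c b d = - levi_civita a b c d"
proof -
  have "levi_civita a c b d = of_int (sign (Transposition.transpose (1::4) 2)) * levi_civita a b c d"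
    unfolding levi_civita_def
  proof (rule lc_perm[OF permutes_swap_id])
    fix i :: 4
    show "idx4 a c b d i = idx4 a b c d (Transposition.transpose 1 2 i)"
      using ex4[of i] by (elim disjE) (simp_all add: Transposition.transpose_def)
  qed simp_all
  thus ?thesis by (simp add: sign_swap_id)
qed

lemma lc_swap23: "levi_civita a b d c = - levi_civita a b c d"
proof -
  have "levi_civita a b d c = of_int (sign (Transposition.transpose (2::4) 3)) * levi_civita a b c d"
    unfolding levi_civita_def
  proof (rule lc_perm[OF permutes_swap_id])
    fix i :: 4
    show "idx4 a b d c i = idx4 a b c d (Transposition.transpose 2 3 i)"
      using ex4[of i] by (elim disjE) (simp_all add: Transposition.transpose_def)
  qed simp_all
  thus ?thesis by (simp add: sign_swap_id)
qed

lemma lc_z01[simp]: "levi_civita a a c d = 0" using lc_swap01[of a a c d] by linarith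
lemma lc_z12[simp]: "levi_civita a b b d = 0" using lc_swap12[of a b b d] by linarith
lemma lc_z23[simp]: "levi_civita a b c c = 0" using lc_swap23[of a b c c] by linarith
lemma lc_z02[simp]: "levi_civita a b a d = 0" using lc_swap12[of a b a d] by simp
lemma lc_z13[simp]: "levi_civita a b c b = 0" using lc_swap23[of a b c b] by simp
lemma lc_z03[simp]: "levi_civita a b c a = 0" using lc_swap23[of a b c a] by simp

lemma lc_0123: "levi_civita 0 1 2 3 = 1"
proof -
  have "(\<chi> i. axis (idx4 0 1 2 3 i) (1::real)) = mat 1"
  proof -
    have "\<And>i j::4. (\<chi> i. axis (idx4 0 1 2 3 i) (1::real)) $ i $ j = mat 1 $ i $ j"
      subgoal for i j using ex4[of i] by (elim disjE) (simp_all add: axis_def mat_def)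
      done
    thus ?thesis by (simp add: vec_eq_iff)
  qed
  thus ?thesis by (simp add: levi_civita_def)
qed
lemma lc_v0123: "levi_civita 0 1 2 3 = 1" using lc_0123  by simp
lemma lc_v0132: "levi_civita 0 1 3 2 = -1" using lc_0123 lc_swap23[of 0 1 2 3] by simp
lemma lc_v0213: "levi_civita 0 2 1 3 = -1" using lc_0123 lc_swap12[of 0 1 2 3] by simp
lemma lc_v0231: "levi_civita 0 2 3 1 = 1" using lc_0123 lc_swap23[of 0 2 1 3] lc_swap12[of 0 1 2 3] by simp
lemma lc_v0312: "levi_civita 0 3 1 2 = 1" using lc_0123 lc_swap12[of 0 1 3 2] lc_swap23[of 0 1 2 3] by simp
lemma lc_v0321: "levi_civita 0 3 2 1 = -1" using lc_0123 lc_swap12[of 0 2 3 1] lc_swap23[of 0 2 1 3] lc_swap12[of 0 1 2 3] by simp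
lemma lc_v1023: "levi_civita 1 0 2 3 = -1" using lc_0123 lc_swap01[of 0 1 2 3] by simp
lemma lc_v1032: "levi_civita 1 0 3 2 = 1" using lc_0123 lc_swap01[of 0 1 3 2] lc_swap23[of 0 1 2 3] by simp
lemma lc_v1203: "levi_civita 1 2 0 3 = 1" using lc_0123 lc_swap12[of 1 0 2 3] lc_swap01[of 0 1 2 3] by simp
lemma lc_v1230: "levi_civita 1 2 3 0 = -1" using lc_0123 lc_swap23[of 1 2 0 3] lc_swap12[of 1 0 2 3] lc_swap01[of 0 1 2 3] by simp
lemma lc_v1302: "levi_civita 1 3 0 2 = -1" using lc_0123 lc_swap12[of 1 0 3 2] lc_swap01[of 0 1 3 2] lc_swap23[of 0 1 2 3] by simp
lemma lc_v1320: "levi_civita 1 3 2 0 = 1" using lc_0123 lc_swap12[of 1 2 3 0] lc_swap23[of 1 2 0 3] lc_swap12[of 1 0 2 3] lc_swap01[of 0 1 2 3] by simp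
lemma lc_v2013: "levi_civita 2 0 1 3 = 1" using lc_0123 lc_swap01[of 0 2 1 3] lc_swap12[of 0 1 2 3] by simp
lemma lc_v2031: "levi_civita 2 0 3 1 = -1" using lc_0123 lc_swap01[of 0 2 3 1] lc_swap23[of 0 2 1 3] lc_swap12[of 0 1 2 3] by simp
lemma lc_v2103: "levi_civita 2 1 0 3 = -1" using lc_0123 lc_swap01[of 1 2 0 3] lc_swap12[of 1 0 2 3] lc_swap01[of 0 1 2 3] by simp
lemma lc_v2130: "levi_civita 2 1 3 0 = 1" using lc_0123 lc_swap01[of 1 2 3 0] lc_swap23[of 1 2 0 3] lc_swap12[of 1 0 2 3] lc_swap01[of 0 1 2 3] by simp
lemma lc_v2301: "levi_civita 2 3 0 1 = 1" using lc_0123 lc_swap12[of 2 0 3 1] lc_swap01[of 0 2 3 1] lc_swap23[of 0 2 1 3] lc_swap12[of 0 1 2 3] by simp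
lemma lc_v2310: "levi_civita 2 3 1 0 = -1" using lc_0123 lc_swap12[of 2 1 3 0] lc_swap01[of 1 2 3 0] lc_swap23[of 1 2 0 3] lc_swap12[of 1 0 2 3] lc_swap01[of 0 1 2 3] by simp
lemma lc_v3012: "levi_civita 3 0 1 2 = -1" using lc_0123 lc_swap01[of 0 3 1 2] lc_swap12[of 0 1 3 2] lc_swap23[of 0 1 2 3] by simp
lemma lc_v3021: "levi_civita 3 0 2 1 = 1" using lc_0123 lc_swap01[of 0 3 2 1] lc_swap12[of 0 2 3 1] lc_swap23[of 0 2 1 3] lc_swap12[of 0 1 2 3] by simp
lemma lc_v3102: "levi_civita 3 1 0 2 = 1" using lc_0123 lc_swap01[of 1 3 0 2] lc_swap12[of 1 0 3 2] lc_swap01[of 0 1 3 2] lc_swap23[of 0 1 2 3] by simp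
lemma lc_v3120: "levi_civita 3 1 2 0 = -1" using lc_0123 lc_swap01[of 1 3 2 0] lc_swap12[of 1 2 3 0] lc_swap23[of 1 2 0 3] lc_swap12[of 1 0 2 3] lc_swap01[of 0 1 2 3] by simp
lemma lc_v3201: "levi_civita 3 2 0 1 = -1" using lc_0123 lc_swap01[of 2 3 0 1] lc_swap12[of 2 0 3 1] lc_swap01[of 0 2 3 1] lc_swap23[of 0 2 1 3] lc_swap12[of 0 1 2 3] by simp
lemma lc_v3210: "levi_civita 3 2 1 0 = 1" using lc_0123 lc_swap01[of 2 3 1 0] lc_swap12[of 2 1 3 0] lc_swap01[of 1 2 3 0] lc_swap23[of 1 2 0 3] lc_swap12[of 1 0 2 3] lc_swap01[of 0 1 2 3] by simp
lemmas lc_vals = lc_v0123 lc_v0132 lc_v0213 lc_v0231 lc_v0312 lc_v0321 lc_v1023 lc_v1032 lc_v1203 lc_v1230 lc_v1302 lc_v1320 lc_v2013 lc_v2031 lc_v2103 lc_v2130 lc_v2301 lc_v2310 lc_v3012 lc_v3021 lc_v3102 lc_v3120 lc_v3201 lc_v3210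


lemma lc_contr:
  "(\<Sum>r\<in>UNIV. \<Sum>d\<in>UNIV. levi_civita c m r d * levi_civita r d u v)
   = 2 * ((if c = u \<and> m = v then 1 else 0) - (if c = v \<and> m = u then 1 else 0))"
  using ex4[of c] ex4[of m] ex4[of u] ex4[of v]
  by (elim disjE) (simp_all add: sum4 lc_vals)

lemma prod4: "prod f (UNIV::4 set) = f 0 * f 1 * f 2 * f 3"
  unfolding UNIV4' by (simp add: mult.assoc)

lemma sum_fun4:
  fixes G :: "(4 \<Rightarrow> 4) \<Rightarrow> real"
  shows "sum G {h. \<forall>i. h i \<in> UNIV} = (\<Sum>p\<in>UNIV. \<Sum>q\<in>UNIV. \<Sum>a\<in>UNIV. \<Sum>b\<in>UNIV. G (idx4 p q a b))"
proof -
  let ?k = "\<lambda>(p,q,a,b). idx4 p q a b"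
  have inj: "inj ?k"
  proof (rule injI, clarsimp)
    fix p q a b p' q' a' b' :: 4
    assume "idx4 p q a b = idx4 p' q' a' b'"
    from fun_cong[OF this, of 0] fun_cong[OF this, of 1] fun_cong[OF this, of 2] fun_cong[OF this, of 3]
    show "p = p' \<and> q = q' \<and> a = a' \<and> b = b'" by simp
  qed
  have surj: "range ?k = UNIV"
  proof (rule surjI[of _ "\<lambda>h. (h 0, h 1, h 2, h 3)"])
    fix h :: "4 \<Rightarrow> 4"
    show "?k (h 0, h 1, h 2, h 3) = h"
    proof
      fix i :: 4 show "?k (h 0, h 1, h 2, h 3) i = h i" using ex4[of i] by auto
    qed
  qed
  have "(\<Sum>p\<in>UNIV. \<Sum>q\<in>UNIV. \<Sum>a\<in>UNIV. \<Sum>b\<in>UNIV. G (idx4 p q a b))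
      = (\<Sum>x\<in>UNIV. G (?k x))"
    by (simp add: sum.cartesian_product case_prod_beta)
  also have "\<dots> = sum G (range ?k)"
    using sum.reindex[OF inj, of G] by simp
  finally show ?thesis using surj by simp
qed

lemma E4:
  fixes H :: "real^4^4"
  shows "(\<Sum>p\<in>UNIV. \<Sum>q\<in>UNIV. \<Sum>a\<in>UNIV. \<Sum>b\<in>UNIV.
            H$r$p * H$d$q * H$u$a * H$v$b * levi_civita p q a b) = det H * levi_civita r d u v"
proof -
  let ?f = "idx4 r d u v"
  have "(\<chi> i. axis (?f i) (1::real)) ** H = (\<chi> i. H $ ?f i)"
  proof -
    have "\<And>i j. (\<Sum>k\<in>UNIV. axis (?f i) (1::real) $ k * H $ k $ j) = H $ ?f i $ j"
by (simp add: axis_def if_distrib[of "\<lambda>x. x * _"] cong: if_cong)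
    thus ?thesis by (simp add: vec_eq_iff matrix_matrix_mult_def)
  qed
  hence "levi_civita r d u v * det H = det (\<chi> i. H $ ?f i)"
by (metis levi_civita_def det_mul)
  also have "(\<chi> i. H $ ?f i) = (\<chi> i. \<Sum>p\<in>UNIV. (H $ ?f i $ p) *s axis p (1::real))"
by (simp add: basis_expansion)
  also have "det \<dots> = sum (\<lambda>h. det (\<chi> i. (H $ ?f i $ h i) *s axis (h i) (1::real))) {h. \<forall>i. h i \<in> UNIV}"
by (rule det_linear_rows_sum) simp
  also have "\<dots> = sum (\<lambda>h. (\<Prod>i\<in>UNIV. H $ ?f i $ h i) * det (\<chi> i. axis (h i) (1::real))) {h. \<forall>i. h i \<in> UNIV}"
by (simp only: det_rows_mul)
  also have "\<dots> = (\<Sum>p\<in>UNIV. \<Sum>q\<in>UNIV. \<Sum>a\<in>UNIV. \<Sum>b\<in>UNIV.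
            H$r$p * H$d$q * H$u$a * H$v$b * levi_civita p q a b)"
by (simp only: sum_fun4) (simp add: prod4 levi_civita_def)
  finally show ?thesis by (simp add: mult.commute)
qed

lemma swap_d3: "(\<Sum>p\<in>A. \<Sum>q\<in>B. \<Sum>a\<in>C. \<Sum>b\<in>D. \<Sum>u\<in>E. f p q a b u)
   = (\<Sum>p\<in>A. \<Sum>q\<in>B. \<Sum>a\<in>C. \<Sum>u\<in>E. \<Sum>b\<in>D. f p q a b u)"
  by (rule sum.cong[OF refl], rule sum.cong[OF refl], rule sum.cong[OF refl], rule sum.swap)
lemma swap_d2: "(\<Sum>p\<in>A. \<Sum>q\<in>B. \<Sum>a\<in>C. \<Sum>u\<in>E. g p q a u)
   = (\<Sum>p\<in>A. \<Sum>q\<in>B. \<Sum>u\<in>E. \<Sum>a\<in>C. g p q a u)"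
  by (rule sum.cong[OF refl], rule sum.cong[OF refl], rule sum.swap)
lemma swap_d1: "(\<Sum>p\<in>A. \<Sum>q\<in>B. \<Sum>u\<in>E. g p q u)
   = (\<Sum>p\<in>A. \<Sum>u\<in>E. \<Sum>q\<in>B. g p q u)"
  by (rule sum.cong[OF refl], rule sum.swap)

lemma pull4: "(\<Sum>p\<in>A. \<Sum>q\<in>B. \<Sum>a\<in>C. \<Sum>b\<in>D. \<Sum>u\<in>E. f p q a b u)
   = (\<Sum>u\<in>E. \<Sum>p\<in>A. \<Sum>q\<in>B. \<Sum>a\<in>C. \<Sum>b\<in>D. f p q a b u)"
proof -
  have "(\<Sum>p\<in>A. \<Sum>q\<in>B. \<Sum>a\<in>C. \<Sum>b\<in>D. \<Sum>u\<in>E. f p q a b u) = (\<Sum>p\<in>A. \<Sum>q\<in>B. \<Sum>a\<in>C. \<Sum>u\<in>E. \<Sum>b\<in>D. f p q a b u)" by (rule swap_d3)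
  also have "\<dots> = (\<Sum>p\<in>A. \<Sum>q\<in>B. \<Sum>u\<in>E. \<Sum>a\<in>C. \<Sum>b\<in>D. f p q a b u)" by (rule swap_d2)
  also have "\<dots> = (\<Sum>p\<in>A. \<Sum>u\<in>E. \<Sum>q\<in>B. \<Sum>a\<in>C. \<Sum>b\<in>D. f p q a b u)" by (rule swap_d1)
  also have "\<dots> = (\<Sum>u\<in>E. \<Sum>p\<in>A. \<Sum>q\<in>B. \<Sum>a\<in>C. \<Sum>b\<in>D. f p q a b u)" by (rule sum.swap)
  finally show ?thesis .
qed

lemma pull4_2: "(\<Sum>p\<in>A. \<Sum>q\<in>B. \<Sum>a\<in>C. \<Sum>b\<in>D. \<Sum>u\<in>E. \<Sum>v\<in>F. f p q a b u v)
   = (\<Sum>u\<in>E. \<Sum>v\<in>F. \<Sum>p\<in>A. \<Sum>q\<in>B. \<Sum>a\<in>C. \<Sum>b\<in>D. f p q a b u v)"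
proof -
  have "(\<Sum>p\<in>A. \<Sum>q\<in>B. \<Sum>a\<in>C. \<Sum>b\<in>D. \<Sum>u\<in>E. \<Sum>v\<in>F. f p q a b u v) = (\<Sum>u\<in>E. \<Sum>p\<in>A. \<Sum>q\<in>B. \<Sum>a\<in>C. \<Sum>b\<in>D. \<Sum>v\<in>F. f p q a b u v)" by (rule pull4)
  also have "\<dots> = (\<Sum>u\<in>E. \<Sum>v\<in>F. \<Sum>p\<in>A. \<Sum>q\<in>B. \<Sum>a\<in>C. \<Sum>b\<in>D. f p q a b u v)" by (rule sum.cong[OF refl], rule pull4)
  finally show ?thesis .
qed

definition upH :: "real^4^4 \<Rightarrow> (4 \<Rightarrow> 4 \<Rightarrow> real) \<Rightarrow> 4 \<Rightarrow> 4 \<Rightarrow> real" where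
  "upH H K r d = (\<Sum>p\<in>UNIV. \<Sum>q\<in>UNIV. H $ r $ p * H $ d $ q * K p q)"

lemma stepA:
  fixes H :: "real^4^4" and F :: "4 \<Rightarrow> 4 \<Rightarrow> real" and k :: real
  assumes Hs: "\<And>i j. H $ i $ j = H $ j $ i"
  shows "upH H (\<lambda>p q. (1/2) * (\<Sum>a\<in>UNIV. \<Sum>b\<in>UNIV. k * levi_civita p q a b * upH H F a b)) r d
     = (k/2) * det H * (\<Sum>u\<in>UNIV. \<Sum>v\<in>UNIV. levi_civita r d u v * F u v)"
proof -
  have "upH H (\<lambda>p q. (1/2) * (\<Sum>a\<in>UNIV. \<Sum>b\<in>UNIV. k * levi_civita p q a b * upH H F a b)) r d
    = (k/2) * (\<Sum>p\<in>UNIV. \<Sum>q\<in>UNIV. \<Sum>a\<in>UNIV. \<Sum>b\<in>UNIV. \<Sum>u\<in>UNIV. \<Sum>v\<in>UNIV.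
          H$r$p * H$d$q * H$u$a * H$v$b * levi_civita p q a b * F u v)"
    unfolding upH_def by (simp add: sum_distrib_left sum_distrib_right Hs[of _ a for a] mult_ac)
  also have "\<dots> = (k/2) * (\<Sum>u\<in>UNIV. \<Sum>v\<in>UNIV. \<Sum>p\<in>UNIV. \<Sum>q\<in>UNIV. \<Sum>a\<in>UNIV. \<Sum>b\<in>UNIV.
          H$r$p * H$d$q * H$u$a * H$v$b * levi_civita p q a b * F u v)"
    by (subst pull4_2) (rule refl)
  also have "\<dots> = (k/2) * (\<Sum>u\<in>UNIV. \<Sum>v\<in>UNIV. (det H * levi_civita r d u v) * F u v)"
    by (simp add: E4[symmetric] sum_distrib_right)
  finally show ?thesis by (simp add: sum_distrib_left mult_ac)
qed

lemma pull2_2: "(\<Sum>r\<in>A. \<Sum>d\<in>B. \<Sum>u\<in>C. \<Sum>v\<in>D. f r d u v)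
   = (\<Sum>u\<in>C. \<Sum>v\<in>D. \<Sum>r\<in>A. \<Sum>d\<in>B. f r d u v)"
proof -
  have "(\<Sum>r\<in>A. \<Sum>d\<in>B. \<Sum>u\<in>C. \<Sum>v\<in>D. f r d u v)
      = (\<Sum>r\<in>A. \<Sum>u\<in>C. \<Sum>d\<in>B. \<Sum>v\<in>D. f r d u v)" by (rule swap_d1)
  also have "\<dots> = (\<Sum>u\<in>C. \<Sum>r\<in>A. \<Sum>d\<in>B. \<Sum>v\<in>D. f r d u v)" by (rule sum.swap)
  also have "\<dots> = (\<Sum>u\<in>C. \<Sum>r\<in>A. \<Sum>v\<in>D. \<Sum>d\<in>B. f r d u v)"
    by (rule sum.cong[OF refl], rule sum.cong[OF refl], rule sum.swap)
  also have "\<dots> = (\<Sum>u\<in>C. \<Sum>v\<in>D. \<Sum>r\<in>A. \<Sum>d\<in>B. f r d u v)"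
    by (rule sum.cong[OF refl], rule sum.swap)
  finally show ?thesis .
qed

lemma delta_contr:
  fixes F :: "4 \<Rightarrow> 4 \<Rightarrow> real"
  shows "(\<Sum>u\<in>UNIV. \<Sum>v\<in>UNIV. (2 * ((if c = u \<and> m = v then 1 else 0) - (if c = v \<and> m = u then 1 else 0))) * F u v)
     = 2 * (F c m - F m c)"
  using ex4[of c] ex4[of m] by (elim disjE) (simp_all add: sum4 algebra_simps)

lemma stepB:
  fixes H :: "real^4^4" and F :: "4 \<Rightarrow> 4 \<Rightarrow> real" and k :: real
  assumes Hs: "\<And>i j. H $ i $ j = H $ j $ i"
    and kk: "k * k * det H = -1"
    and Fa: "\<And>i j. F i j = - F j i"
  shows "(\<Sum>r\<in>UNIV. \<Sum>d\<in>UNIV. (k * levi_civita c m r d) *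
      upH H (\<lambda>p q. (1/2) * (\<Sum>a\<in>UNIV. \<Sum>b\<in>UNIV. k * levi_civita p q a b * upH H F a b)) r d)
     = - 2 * F c m"
proof -
  have "(\<Sum>r\<in>UNIV. \<Sum>d\<in>UNIV. (k * levi_civita c m r d) *
      upH H (\<lambda>p q. (1/2) * (\<Sum>a\<in>UNIV. \<Sum>b\<in>UNIV. k * levi_civita p q a b * upH H F a b)) r d)
    = (\<Sum>r\<in>UNIV. \<Sum>d\<in>UNIV. (k * levi_civita c m r d) *
         ((k/2) * det H * (\<Sum>u\<in>UNIV. \<Sum>v\<in>UNIV. levi_civita r d u v * F u v)))"
    by (simp only: stepA[OF Hs])
  also have "\<dots> = (k * k * det H / 2) * (\<Sum>r\<in>UNIV. \<Sum>d\<in>UNIV. \<Sum>u\<in>UNIV. \<Sum>v\<in>UNIV.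
         levi_civita c m r d * levi_civita r d u v * F u v)"
    by (simp add: sum_distrib_left mult_ac)
  also have "\<dots> = (k * k * det H / 2) * (\<Sum>u\<in>UNIV. \<Sum>v\<in>UNIV. \<Sum>r\<in>UNIV. \<Sum>d\<in>UNIV.
         levi_civita c m r d * levi_civita r d u v * F u v)"
    by (subst pull2_2) (rule refl)
  also have "\<dots> = (k * k * det H / 2) * (\<Sum>u\<in>UNIV. \<Sum>v\<in>UNIV.
         (\<Sum>r\<in>UNIV. \<Sum>d\<in>UNIV. levi_civita c m r d * levi_civita r d u v) * F u v)"
    by (simp add: sum_distrib_right)
  also have "\<dots> = (k * k * det H / 2) * (2 * (F c m - F m c))"
    by (simp only: lc_contr delta_contr)
  finally show ?thesis using kk Fa[of m c] by simp
qed

lemma lowerraise1: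
  fixes G H :: "real^4^4" and K :: "4 \<Rightarrow> 4 \<Rightarrow> real"
  assumes GH: "\<And>i j. (\<Sum>k\<in>UNIV. G$i$k * H$k$j) = (if i = j then 1 else 0)"
  shows "(\<Sum>r\<in>UNIV. \<Sum>d\<in>UNIV. G$c$r * G$m$d * upH H K r d) = K c m"
proof -
  have "(\<Sum>r\<in>UNIV. \<Sum>d\<in>UNIV. G$c$r * G$m$d * upH H K r d)
      = (\<Sum>r\<in>UNIV. \<Sum>d\<in>UNIV. \<Sum>p\<in>UNIV. \<Sum>q\<in>UNIV. (G$c$r * H$r$p) * (G$m$d * H$d$q) * K p q)"
    unfolding upH_def by (simp only: sum_distrib_left) (simp only: mult_ac)
  also have "\<dots> = (\<Sum>p\<in>UNIV. \<Sum>q\<in>UNIV. \<Sum>r\<in>UNIV. \<Sum>d\<in>UNIV. (G$c$r * H$r$p) * (G$m$d * H$d$q) * K p q)"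
    by (rule pull2_2)
  also have "\<dots> = (\<Sum>p\<in>UNIV. \<Sum>q\<in>UNIV. (\<Sum>r\<in>UNIV. G$c$r * H$r$p) * (\<Sum>d\<in>UNIV. G$m$d * H$d$q) * K p q)"
    by (simp only: sum_distrib_left sum_distrib_right) (rule sum.cong[OF refl], rule sum.cong[OF refl], rule sum.swap)
  also have "\<dots> = (\<Sum>p\<in>UNIV. \<Sum>q\<in>UNIV. (if c = p then 1 else 0) * (if m = q then 1 else 0) * K p q)"
    by (simp only: GH)
  also have "\<dots> = K c m"
    using ex4[of c] ex4[of m] by (elim disjE) (simp_all add: sum4)
  finally show ?thesis .
qed

lemma lowerraise:
  fixes G H :: "real^4^4" and K :: "4 \<Rightarrow> 4 \<Rightarrow> real"
  assumes GH: "\<And>i j. (\<Sum>k\<in>UNIV. G$i$k * H$k$j) = (if i = j then 1 else 0)"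
  shows "(\<Sum>r\<in>UNIV. \<Sum>d\<in>UNIV. (G$c$r * G$m$d - G$c$d * G$m$r) * upH H K r d) = K c m - K m c"
proof -
  have "(\<Sum>r\<in>UNIV. \<Sum>d\<in>UNIV. G$c$d * G$m$r * upH H K r d)
      = (\<Sum>r\<in>UNIV. \<Sum>d\<in>UNIV. G$m$r * G$c$d * upH H K r d)"
    by (simp add: mult_ac)
  also have "\<dots> = K m c" by (rule lowerraise1[OF GH])
  finally have 2: "(\<Sum>r\<in>UNIV. \<Sum>d\<in>UNIV. G$c$d * G$m$r * upH H K r d) = K m c" .
  have "(\<Sum>r\<in>UNIV. \<Sum>d\<in>UNIV. (G$c$r * G$m$d - G$c$d * G$m$r) * upH H K r d)
     = (\<Sum>r\<in>UNIV. \<Sum>d\<in>UNIV. G$c$r * G$m$d * upH H K r d) - (\<Sum>r\<in>UNIV. \<Sum>d\<in>UNIV. G$c$d * G$m$r * upH H K r d)"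
    by (simp add: left_diff_distrib sum_subtractf)
  thus ?thesis using 2 lowerraise1[OF GH, of c m K] by simp
qed

lemma CL:
  fixes v p f f' :: "4 \<Rightarrow> 4 \<Rightarrow> real"
  shows "(\<Sum>r\<in>UNIV. \<Sum>d\<in>UNIV. (1/4) * (\<i> * complex_of_real (v r d) + complex_of_real (p r d)) *
            (complex_of_real (f r d) + \<i> * complex_of_real (f' r d)))
     = (1/4) * (\<i> * complex_of_real (\<Sum>r\<in>UNIV. \<Sum>d\<in>UNIV. v r d * f r d)
              - complex_of_real (\<Sum>r\<in>UNIV. \<Sum>d\<in>UNIV. v r d * f' r d)
              + complex_of_real (\<Sum>r\<in>UNIV. \<Sum>d\<in>UNIV. p r d * f r d)
              + \<i> * complex_of_real (\<Sum>r\<in>UNIV. \<Sum>d\<in>UNIV. p r d * f' r d))"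
proof -
  have e: "\<And>r d. (1/4) * (\<i> * complex_of_real (v r d) + complex_of_real (p r d)) *
            (complex_of_real (f r d) + \<i> * complex_of_real (f' r d))
      = (1/4) * \<i> * complex_of_real (v r d * f r d) - (1/4) * complex_of_real (v r d * f' r d)
        + (1/4) * complex_of_real (p r d * f r d) + (1/4) * \<i> * complex_of_real (p r d * f' r d)"
    by (simp add: field_simps)
  show ?thesis
    by (simp only: e sum.distrib sum_subtractf sum_distrib_left[symmetric] of_real_sum)
       (simp add: algebra_simps)
qed

context
  fixes g :: "real^4 \<Rightarrow> real^4^4" and s :: "real^4 \<Rightarrow> real"
    and \<zeta> :: "real^4 \<Rightarrow> real^4" and x :: "real^4"
  assumes GH: "\<And>i j. (\<Sum>k\<in>UNIV. g x$i$k * ginv g x$k$j) = (if i = j then 1 else 0)"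
    and Hs: "\<And>i j. ginv g x $ i $ j = ginv g x $ j $ i"
    and Gs: "\<And>i j. g x $ i $ j = g x $ j $ i"
    and kk: "(s x * sqrt \<bar>det (g x)\<bar>) * (s x * sqrt \<bar>det (g x)\<bar>) * det (ginv g x) = -1"
    and FA: "\<And>a b. Fk g \<zeta> x a b = - Fk g \<zeta> x b a"
begin

abbreviation "kx \<equiv> s x * sqrt \<bar>det (g x)\<bar>"

lemma vol_eq: "vol g s x a b c d = kx * levi_civita a b c d"
  by (simp add: vol_def)

lemma Fup_eq: "Fup g \<zeta> x = upH (ginv g x) (Fk g \<zeta> x)"
  by (simp add: fun_eq_iff Fup_def upH_def)

lemma Fstar_eq: "Fstar g s \<zeta> x = (\<lambda>p q. (1/2) * (\<Sum>a\<in>UNIV. \<Sum>b\<in>UNIV. kx * levi_civita p q a b * upH (ginv g x) (Fk g \<zeta> x) a b))"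
  by (simp add: fun_eq_iff Fstar_def vol_eq Fup_eq)

lemma Fstar_anti: "Fstar g s \<zeta> x a b = - Fstar g s \<zeta> x b a"
  unfolding Fstar_eq by (simp add: lc_swap01[of b a] sum_negf)

lemma cFup_eq: "cFup g s \<zeta> x r d = complex_of_real (upH (ginv g x) (Fk g \<zeta> x) r d)
     + \<i> * complex_of_real (upH (ginv g x) (Fstar g s \<zeta> x) r d)"
  unfolding cFup_def cF_def upH_def
  by (simp add: distrib_left sum.distrib of_real_sum sum_distrib_left mult_ac)

lemma V1: "(\<Sum>r\<in>UNIV. \<Sum>d\<in>UNIV. vol g s x c m r d * upH (ginv g x) (Fk g \<zeta> x) r d) = 2 * Fstar g s \<zeta> x c m"
  by (simp add: Fstar_def Fup_eq)

lemma V2: "(\<Sum>r\<in>UNIV. \<Sum>d\<in>UNIV. vol g s x c m r d * upH (ginv g x) (Fstar g s \<zeta> x) r d) = - 2 * Fk g \<zeta> x c m"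
  unfolding vol_eq Fstar_eq by (rule stepB[OF Hs kk FA])

lemma L1: "(\<Sum>r\<in>UNIV. \<Sum>d\<in>UNIV. cI g s x c m r d * cFup g s \<zeta> x r d) = cF g s \<zeta> x c m"
proof -
  have "(\<Sum>r\<in>UNIV. \<Sum>d\<in>UNIV. cI g s x c m r d * cFup g s \<zeta> x r d)
    = (1/4) * (\<i> * complex_of_real (\<Sum>r\<in>UNIV. \<Sum>d\<in>UNIV. vol g s x c m r d * upH (ginv g x) (Fk g \<zeta> x) r d)
              - complex_of_real (\<Sum>r\<in>UNIV. \<Sum>d\<in>UNIV. vol g s x c m r d * upH (ginv g x) (Fstar g s \<zeta> x) r d)
              + complex_of_real (\<Sum>r\<in>UNIV. \<Sum>d\<in>UNIV. (g x$c$r * g x$m$d - g x$c$d * g x$m$r) * upH (ginv g x) (Fk g \<zeta> x) r d)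
              + \<i> * complex_of_real (\<Sum>r\<in>UNIV. \<Sum>d\<in>UNIV. (g x$c$r * g x$m$d - g x$c$d * g x$m$r) * upH (ginv g x) (Fstar g s \<zeta> x) r d))"
    unfolding cI_def cFup_eq by (rule CL)
  also have "\<dots> = (1/4) * (\<i> * complex_of_real (2 * Fstar g s \<zeta> x c m) - complex_of_real (- 2 * Fk g \<zeta> x c m)
      + complex_of_real (Fk g \<zeta> x c m - Fk g \<zeta> x m c) + \<i> * complex_of_real (Fstar g s \<zeta> x c m - Fstar g s \<zeta> x m c))"
    by (simp only: V1 V2 lowerraise[OF GH])
  also have "\<dots> = cF g s \<zeta> x c m"
    using FA[of m c] Fstar_anti[of m c] by (simp add: cF_def field_simps)
  finally show ?thesis .
qed


lemma cF_anti: "cF g s \<zeta> x a b = - cF g s \<zeta> x b a"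
  unfolding cF_def using FA[of a b] Fstar_anti[of a b] by (simp add: algebra_simps)

lemma Z1: "(\<Sum>m\<in>UNIV. cF g s \<zeta> x c m * complex_of_real (\<zeta> x $ m)) = ernst g s \<zeta> x c / 2"
  by (simp add: ernst_def)

lemma Z2: "(\<Sum>m\<in>UNIV. complex_of_real (\<zeta> x $ m) * cF g s \<zeta> x m a) = - ernst g s \<zeta> x a / 2"
proof -
  have "(\<Sum>m\<in>UNIV. complex_of_real (\<zeta> x $ m) * cF g s \<zeta> x m a) = - (\<Sum>m\<in>UNIV. cF g s \<zeta> x a m * complex_of_real (\<zeta> x $ m))"
    by (simp add: cF_anti[of _ a] sum_negf mult_ac)
  thus ?thesis by (simp add: Z1)
qed

lemma T1: "(\<Sum>m\<in>UNIV. \<Sum>r\<in>UNIV. \<Sum>d\<in>UNIV. cQ g s \<zeta> x c m r d * complex_of_real (\<zeta> x $ m) * cFup g s \<zeta> x r d)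
   = 2 * ernst g s \<zeta> x c * cFF g s \<zeta> x"
proof -
  let ?P = "cFF g s \<zeta> x"
  have inner: "(\<Sum>r\<in>UNIV. \<Sum>d\<in>UNIV. cQ g s \<zeta> x c m r d * complex_of_real (\<zeta> x $ m) * cFup g s \<zeta> x r d)
      = 4 * ?P * (cF g s \<zeta> x c m * complex_of_real (\<zeta> x $ m))" for m
  proof -
    let ?z = "complex_of_real (\<zeta> x $ m)"
    have e: "\<And>r d. cQ g s \<zeta> x c m r d * ?z * cFup g s \<zeta> x r d
       = (6 * ?z * cF g s \<zeta> x c m) * (cF g s \<zeta> x r d * cFup g s \<zeta> x r d)
         - (2 * ?P * ?z) * (cI g s x c m r d * cFup g s \<zeta> x r d)"
      by (simp add: cQ_def algebra_simps)
    have "(\<Sum>r\<in>UNIV. \<Sum>d\<in>UNIV. cQ g s \<zeta> x c m r d * ?z * cFup g s \<zeta> x r d)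
       = (6 * ?z * cF g s \<zeta> x c m) * (\<Sum>r\<in>UNIV. \<Sum>d\<in>UNIV. cF g s \<zeta> x r d * cFup g s \<zeta> x r d)
         - (2 * ?P * ?z) * (\<Sum>r\<in>UNIV. \<Sum>d\<in>UNIV. cI g s x c m r d * cFup g s \<zeta> x r d)"
      by (simp only: e sum_subtractf sum_distrib_left[symmetric])
    also have "\<dots> = (6 * ?z * cF g s \<zeta> x c m) * ?P - (2 * ?P * ?z) * cF g s \<zeta> x c m"
      by (simp only: L1 cFF_def)
    finally show ?thesis by (simp add: algebra_simps)
  qed
  have "(\<Sum>m\<in>UNIV. \<Sum>r\<in>UNIV. \<Sum>d\<in>UNIV. cQ g s \<zeta> x c m r d * complex_of_real (\<zeta> x $ m) * cFup g s \<zeta> x r d)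
     = 4 * ?P * (\<Sum>m\<in>UNIV. cF g s \<zeta> x c m * complex_of_real (\<zeta> x $ m))"
    by (simp only: inner sum_distrib_left)
  thus ?thesis by (simp add: Z1)
qed

lemma vz0: "(\<Sum>m\<in>UNIV. \<Sum>r\<in>UNIV. complex_of_real (\<zeta> x $ m * \<zeta> x $ r) * complex_of_real (vol g s x m a r c)) = 0"
proof -
  let ?S = "(\<Sum>m\<in>UNIV. \<Sum>r\<in>UNIV. complex_of_real (\<zeta> x $ m * \<zeta> x $ r) * complex_of_real (vol g s x m a r c))"
  have sw: "levi_civita r a m c = - levi_civita m a r c" for m r
    using lc_swap01[of r a m c] lc_swap12[of a r m c] lc_swap01[of a m r c] by simp
  have "?S = (\<Sum>r\<in>UNIV. \<Sum>m\<in>UNIV. complex_of_real (\<zeta> x $ m * \<zeta> x $ r) * complex_of_real (vol g s x m a r c))"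
    by (rule sum.swap)
  also have "\<dots> = (\<Sum>r\<in>UNIV. \<Sum>m\<in>UNIV. - (complex_of_real (\<zeta> x $ r * \<zeta> x $ m) * complex_of_real (vol g s x r a m c)))"
    apply (rule sum.cong[OF refl], rule sum.cong[OF refl])
    subgoal for r m by (simp add: vol_eq sw[of m r] mult_ac)
    done
  also have "\<dots> = - ?S"
    by (simp only: sum_negf)
  finally show ?thesis by simp
qed

lemma Gz: "(\<Sum>m\<in>UNIV. \<Sum>r\<in>UNIV. \<zeta> x $ m * \<zeta> x $ r * (g x$m$r * g x$a$c - g x$m$c * g x$a$r)) = - gam g \<zeta> x a c"
proof -
  have 1: "(\<Sum>m\<in>UNIV. \<Sum>r\<in>UNIV. \<zeta> x $ m * \<zeta> x $ r * g x$m$r) = lam g \<zeta> x"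
    by (simp add: lam_def zlow_def sum_distrib_left sum_distrib_right mult_ac)
  have 2: "(\<Sum>m\<in>UNIV. \<Sum>r\<in>UNIV. \<zeta> x $ m * \<zeta> x $ r * (g x$m$c * g x$a$r)) = zlow g \<zeta> x c * zlow g \<zeta> x a"
  proof -
    have a: "(\<Sum>m\<in>UNIV. \<zeta> x $ m * g x$m$c) = zlow g \<zeta> x c"
      by (simp add: zlow_def Gs[of _ c] mult_ac)
    have b: "(\<Sum>r\<in>UNIV. \<zeta> x $ r * g x$a$r) = zlow g \<zeta> x a"
      by (simp add: zlow_def mult_ac)
    have "(\<Sum>m\<in>UNIV. \<Sum>r\<in>UNIV. \<zeta> x $ m * \<zeta> x $ r * (g x$m$c * g x$a$r))
       = (\<Sum>m\<in>UNIV. \<zeta> x $ m * g x$m$c) * (\<Sum>r\<in>UNIV. \<zeta> x $ r * g x$a$r)"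
      by (simp only: sum_product) (simp only: mult_ac)
    thus ?thesis by (simp only: a b)
  qed
  have "(\<Sum>m\<in>UNIV. \<Sum>r\<in>UNIV. \<zeta> x $ m * \<zeta> x $ r * (g x$m$r * g x$a$c - g x$m$c * g x$a$r))
     = g x$a$c * (\<Sum>m\<in>UNIV. \<Sum>r\<in>UNIV. \<zeta> x $ m * \<zeta> x $ r * g x$m$r)
       - (\<Sum>m\<in>UNIV. \<Sum>r\<in>UNIV. \<zeta> x $ m * \<zeta> x $ r * (g x$m$c * g x$a$r))"
    by (simp add: right_diff_distrib sum_subtractf sum_distrib_left mult_ac)
  thus ?thesis using 1 2 by (simp add: gam_def algebra_simps)
qed


lemma T2: "(\<Sum>m\<in>UNIV. \<Sum>r\<in>UNIV. complex_of_real (\<zeta> x $ m * \<zeta> x $ r) * cQ g s \<zeta> x m a r c)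
   = 3/2 * ernst g s \<zeta> x a * ernst g s \<zeta> x c + 1/2 * cFF g s \<zeta> x * complex_of_real (gam g \<zeta> x a c)"
proof -
  let ?P = "cFF g s \<zeta> x"
  have e: "\<And>m r. complex_of_real (\<zeta> x $ m * \<zeta> x $ r) * cQ g s \<zeta> x m a r c
     = 6 * ((complex_of_real (\<zeta> x $ m) * cF g s \<zeta> x m a) * (complex_of_real (\<zeta> x $ r) * cF g s \<zeta> x r c))
       - (2 * ?P) * (complex_of_real (\<zeta> x $ m * \<zeta> x $ r) * cI g s x m a r c)"
    by (simp add: cQ_def algebra_simps)
  have e2: "\<And>m r. complex_of_real (\<zeta> x $ m * \<zeta> x $ r) * cI g s x m a r c
     = (1/4 * \<i>) * (complex_of_real (\<zeta> x $ m * \<zeta> x $ r) * complex_of_real (vol g s x m a r c))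
       + 1/4 * complex_of_real (\<zeta> x $ m * \<zeta> x $ r * (g x$m$r * g x$a$c - g x$m$c * g x$a$r))"
    by (simp add: cI_def algebra_simps)
  have I: "(\<Sum>m\<in>UNIV. \<Sum>r\<in>UNIV. complex_of_real (\<zeta> x $ m * \<zeta> x $ r) * cI g s x m a r c)
      = - (1/4) * complex_of_real (gam g \<zeta> x a c)"
  proof -
    have "(\<Sum>m\<in>UNIV. \<Sum>r\<in>UNIV. complex_of_real (\<zeta> x $ m * \<zeta> x $ r) * cI g s x m a r c)
      = (1/4 * \<i>) * (\<Sum>m\<in>UNIV. \<Sum>r\<in>UNIV. complex_of_real (\<zeta> x $ m * \<zeta> x $ r) * complex_of_real (vol g s x m a r c))
        + 1/4 * complex_of_real (\<Sum>m\<in>UNIV. \<Sum>r\<in>UNIV. \<zeta> x $ m * \<zeta> x $ r * (g x$m$r * g x$a$c - g x$m$c * g x$a$r))"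
      by (simp only: e2 sum.distrib sum_distrib_left[symmetric] of_real_sum)
    also have "\<dots> = - (1/4) * complex_of_real (gam g \<zeta> x a c)"
      by (simp only: vz0 Gz) simp
    finally show ?thesis .
  qed
  have "(\<Sum>m\<in>UNIV. \<Sum>r\<in>UNIV. complex_of_real (\<zeta> x $ m * \<zeta> x $ r) * cQ g s \<zeta> x m a r c)
     = 6 * ((\<Sum>m\<in>UNIV. complex_of_real (\<zeta> x $ m) * cF g s \<zeta> x m a) * (\<Sum>r\<in>UNIV. complex_of_real (\<zeta> x $ r) * cF g s \<zeta> x r c))
       - (2 * ?P) * (\<Sum>m\<in>UNIV. \<Sum>r\<in>UNIV. complex_of_real (\<zeta> x $ m * \<zeta> x $ r) * cI g s x m a r c)"
    by (simp only: e sum_subtractf sum_distrib_left[symmetric] sum_product)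
  also have "\<dots> = 6 * ((- ernst g s \<zeta> x a / 2) * (- ernst g s \<zeta> x c / 2)) - (2 * ?P) * (- (1/4) * complex_of_real (gam g \<zeta> x a c))"
    by (simp only: Z2 I)
  finally show ?thesis by (simp add: field_simps)
qed

lemma Qzero: "simon_expr g s \<zeta> x (cQ g s \<zeta> x) a b c = 0"
  unfolding simon_expr_def T1 T2 by (simp add: field_simps)

end

lemma simon_lin:
  "simon_expr g s \<zeta> x (\<lambda>a b c d. T1 a b c d + T2 a b c d / sp) a b c
   = simon_expr g s \<zeta> x T1 a b c + simon_expr g s \<zeta> x T2 a b c / sp"
proof -
  have A: "\<And>c. (\<Sum>m\<in>UNIV. \<Sum>r\<in>UNIV. \<Sum>d\<in>UNIV. (T1 c m r d + T2 c m r d / sp) * complex_of_real (\<zeta> x $ m) * cFup g s \<zeta> x r d)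
     = (\<Sum>m\<in>UNIV. \<Sum>r\<in>UNIV. \<Sum>d\<in>UNIV. T1 c m r d * complex_of_real (\<zeta> x $ m) * cFup g s \<zeta> x r d)
       + (\<Sum>m\<in>UNIV. \<Sum>r\<in>UNIV. \<Sum>d\<in>UNIV. T2 c m r d * complex_of_real (\<zeta> x $ m) * cFup g s \<zeta> x r d) / sp"
    by (simp add: distrib_right sum.distrib sum_divide_distrib)
  have B: "\<And>a c. (\<Sum>m\<in>UNIV. \<Sum>r\<in>UNIV. complex_of_real (\<zeta> x $ m * \<zeta> x $ r) * (T1 m a r c + T2 m a r c / sp))
     = (\<Sum>m\<in>UNIV. \<Sum>r\<in>UNIV. complex_of_real (\<zeta> x $ m * \<zeta> x $ r) * T1 m a r c)
       + (\<Sum>m\<in>UNIV. \<Sum>r\<in>UNIV. complex_of_real (\<zeta> x $ m * \<zeta> x $ r) * T2 m a r c) / sp"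
    by (simp add: distrib_left sum.distrib sum_divide_distrib)
  show ?thesis
    unfolding simon_expr_def A B by (simp add: algebra_simps add_divide_distrib diff_divide_distrib)
qed

lemma dm: "det minkowski = (-1::real)"
  by (subst det_diagonal) (auto simp: minkowski_def prod4)

theorem mainTheorem8:
  fixes g :: "real^4 \<Rightarrow> real^4^4" and s :: "real^4 \<Rightarrow> real"
    and \<zeta> :: "real^4 \<Rightarrow> real^4" and \<sigma>' :: "real^4 \<Rightarrow> complex"
    and U V :: "(real^4) set"
  assumes U_open: "open U"
    and metric_lorentzian: "\<forall>x\<in>U. lorentzian_matrix (g x)"
    and metric_smooth: "\<forall>a b. smooth_on U (\<lambda>x. g x $ a $ b)"
    and orientation: "continuous_on U s" "\<forall>x\<in>U. s x \<in> {-1, 1}"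
    and zeta_smooth: "\<forall>a. smooth_on U (\<lambda>x. \<zeta> x $ a)"
    and killing: "\<forall>x\<in>U. \<forall>a b. Fk g \<zeta> x a b + Fk g \<zeta> x b a = 0"
    and V_open: "open V" and V_sub: "V \<subseteq> U"
    and pot_diff: "\<forall>x\<in>V. \<sigma>' differentiable (at x)"
    and potential: "\<forall>x\<in>V. \<forall>a. pd \<sigma>' a x = ernst g s \<zeta> x a"
    and nonzero: "\<forall>x\<in>V. \<sigma>' x \<noteq> 0"
  shows "\<forall>x\<in>V. \<forall>a b c.
           simon g s \<zeta> x a b c = simon_expr g s \<zeta> x (mars_simon g s \<zeta> (\<sigma>' x) x) a b c"
proof (intro ballI allI)
  fix x a b c assume xV: "x \<in> V"
  hence xU: "x \<in> U" using V_sub by auto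
  from metric_lorentzian xU have L: "lorentzian_matrix (g x)" by auto
  hence Gt: "transpose (g x) = g x" and "\<exists>P::real^4^4. invertible P \<and> transpose P ** g x ** P = minkowski"
    by (auto simp: lorentzian_matrix_def)
  then obtain P :: "real^4^4" where P: "transpose P ** g x ** P = minkowski" by auto
  have "det (transpose P ** g x ** P) = -1" using P dm by simp
  hence dP: "det (g x) * (det P * det P) = -1" by (simp add: det_mul mult_ac)
  have dG: "det (g x) < 0"
  proof (rule ccontr)
    assume "\<not> det (g x) < 0"
    hence "det (g x) * (det P * det P) \<ge> 0" by simp
    thus False using dP by simp
  qed
  have inv: "invertible (g x)" using dG invertible_det_nz by force
  have HH: "g x ** ginv g x = mat 1 \<and> ginv g x ** g x = mat 1"
    using inv unfolding invertible_def ginv_def matrix_inv_def by (rule someI_ex)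
  have GH: "\<And>i j. (\<Sum>k\<in>UNIV. g x$i$k * ginv g x$k$j) = (if i = j then 1 else 0)"
  proof -
    fix i j
    have "(g x ** ginv g x) $ i $ j = mat 1 $ i $ j" using HH by simp
    thus "(\<Sum>k\<in>UNIV. g x$i$k * ginv g x$k$j) = (if i = j then 1 else 0)"
      by (simp add: matrix_matrix_mult_def mat_def)
  qed
  have "transpose (ginv g x ** g x) = mat 1" using HH by (simp add: transpose_mat)
  hence GHt: "g x ** transpose (ginv g x) = mat 1"
    by (simp add: matrix_transpose_mul Gt)
  have Ht: "transpose (ginv g x) = ginv g x"
  proof -
    have "transpose (ginv g x) = (ginv g x ** g x) ** transpose (ginv g x)" using HH by simp
    also have "\<dots> = ginv g x ** (g x ** transpose (ginv g x))" by (simp add: matrix_mul_assoc)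
    also have "\<dots> = ginv g x" using GHt by simp
    finally show ?thesis .
  qed
  have Hs: "\<And>i j. ginv g x $ i $ j = ginv g x $ j $ i"
  proof -
    fix i j
    have "transpose (ginv g x) $ i $ j = ginv g x $ i $ j" by (simp only: Ht)
    thus "ginv g x $ i $ j = ginv g x $ j $ i" by (simp add: transpose_def)
  qed
  have Gs: "\<And>i j. g x $ i $ j = g x $ j $ i"
  proof -
    fix i j
    have "transpose (g x) $ i $ j = g x $ i $ j" by (simp only: Gt)
    thus "g x $ i $ j = g x $ j $ i" by (simp add: transpose_def)
  qed
  have dGH: "det (g x) * det (ginv g x) = 1"
    using HH det_mul[of "g x" "ginv g x"] by simp
  have ss: "s x * s x = 1" using orientation(2) xU by auto
  have "(s x * sqrt \<bar>det (g x)\<bar>) * (s x * sqrt \<bar>det (g x)\<bar>) = \<bar>det (g x)\<bar>"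
    using ss by (simp add: algebra_simps)
  hence kk: "(s x * sqrt \<bar>det (g x)\<bar>) * (s x * sqrt \<bar>det (g x)\<bar>) * det (ginv g x) = -1"
    using dG dGH by simp
  have FA: "\<And>a b. Fk g \<zeta> x a b = - Fk g \<zeta> x b a"
  proof -
    fix a b
    have "Fk g \<zeta> x a b + Fk g \<zeta> x b a = 0" using killing xU by blast
    thus "Fk g \<zeta> x a b = - Fk g \<zeta> x b a" by linarith
  qed
  have ms: "mars_simon g s \<zeta> (\<sigma>' x) x = (\<lambda>a b c d. cC g s x a b c d + cQ g s \<zeta> x a b c d / \<sigma>' x)"
    by (simp add: fun_eq_iff mars_simon_def)
  show "simon g s \<zeta> x a b c = simon_expr g s \<zeta> x (mars_simon g s \<zeta> (\<sigma>' x) x) a b c"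
    unfolding ms simon_lin simon_def Qzero[where g=g and x=x and s=s and \<zeta>=\<zeta>, OF GH Hs Gs kk FA] by simp
qed

end
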